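(* Given $a,b,c\in\ell_\infty$, there is a continuous symmetric trilinear form $A\in\mathcal{L}_s(^3\ell_1)$ such that for every $z_1\in\ell_1''$ and all $z_2,z_3\in c_0^\perp\subseteq\ell_1''$, $$\tilde A(z_1,z_2,z_3)=z_1(a)\,z_2(b)\,z_3(c).$$
   Context: $\ell_1''=\ell_\infty'$ and $c_0^\perp\subseteq\ell_1''$ is the annihilator of $c_0\subseteq\ell_\infty$. For a continuous trilinear form $A$ on $\ell_1$, its canonical (Aron–Berner) extension is $\tilde A(z_1,z_2,z_3)=\lim_{\alpha}\lim_{\beta}\lim_{\gamma}A(x_\alpha,y_\beta,u_\gamma)$, where $(x_\alpha),(y_\beta),(u_\gamma)\subseteq\ell_1$ are nets weak-star converging to $z_1,z_2,z_3$ respectively, with limits taken from the last variable to the first. *)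

theory Defs
  imports "HOL-Analysis.Analysis"
begin

definition l1 :: "(nat \<Rightarrow> real) set" where
  "l1 = {x. summable (\<lambda>n. \<bar>x n\<bar>)}"

definition l1norm :: "(nat \<Rightarrow> real) \<Rightarrow> real" where
  "l1norm x = (\<Sum>n. \<bar>x n\<bar>)"

definition linf :: "(nat \<Rightarrow> real) set" where
  "linf = {f. \<exists>B. \<forall>n. \<bar>f n\<bar> \<le> B}"

definition supnorm :: "(nat \<Rightarrow> real) \<Rightarrow> real" where
  "supnorm f = (SUP n. \<bar>f n\<bar>)"

definition c0 :: "(nat \<Rightarrow> real) set" where
  "c0 = {f. f \<longlonglongrightarrow> 0}"

text \<open>Elements of the bidual l1'' = (l_inf)': continuous linear functionals on l_inf
  (only their values on l_inf matter).\<close>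

definition l1_bidual :: "((nat \<Rightarrow> real) \<Rightarrow> real) \<Rightarrow> bool" where
  "l1_bidual z \<longleftrightarrow>
     (\<forall>f\<in>linf. \<forall>g\<in>linf. z (\<lambda>n. f n + g n) = z f + z g) \<and>
     (\<forall>f\<in>linf. \<forall>c. z (\<lambda>n. c * f n) = c * z f) \<and>
     (\<exists>C. \<forall>f\<in>linf. \<bar>z f\<bar> \<le> C * supnorm f)"

definition c0_perp :: "((nat \<Rightarrow> real) \<Rightarrow> real) \<Rightarrow> bool" where
  "c0_perp z \<longleftrightarrow> l1_bidual z \<and> (\<forall>f\<in>c0. z f = 0)"

definition pair :: "(nat \<Rightarrow> real) \<Rightarrow> (nat \<Rightarrow> real) \<Rightarrow> real" where
  "pair x f = (\<Sum>n. x n * f n)"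

text \<open>Nets are represented by
  (proper) filters on l1: a net (x_alpha) corresponds to its image filter, and all the
  iterated limits in the Aron-Berner definition only depend on this image filter.\<close>

definition wstar_conv :: "(nat \<Rightarrow> real) filter \<Rightarrow> ((nat \<Rightarrow> real) \<Rightarrow> real) \<Rightarrow> bool" where
  "wstar_conv F z \<longleftrightarrow> F \<noteq> bot \<and> (\<forall>\<^sub>F x in F. x \<in> l1) \<and>
     (\<forall>f\<in>linf. ((\<lambda>x. pair x f) \<longlongrightarrow> z f) F)"

definition trilinear_l1 :: "((nat \<Rightarrow> real) \<Rightarrow> (nat \<Rightarrow> real) \<Rightarrow> (nat \<Rightarrow> real) \<Rightarrow> real) \<Rightarrow> bool" where
  "trilinear_l1 A \<longleftrightarrow>
    (\<forall>x\<in>l1. \<forall>x'\<in>l1. \<forall>y\<in>l1. \<forall>u\<in>l1. \<forall>c::real.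
        A (\<lambda>n. x n + x' n) y u = A x y u + A x' y u \<and> A (\<lambda>n. c * x n) y u = c * A x y u \<and>
        A y (\<lambda>n. x n + x' n) u = A y x u + A y x' u \<and> A y (\<lambda>n. c * x n) u = c * A y x u \<and>
        A y u (\<lambda>n. x n + x' n) = A y u x + A y u x' \<and> A y u (\<lambda>n. c * x n) = c * A y u x)"

definition cont_sym_trilinear_l1 :: "((nat \<Rightarrow> real) \<Rightarrow> (nat \<Rightarrow> real) \<Rightarrow> (nat \<Rightarrow> real) \<Rightarrow> real) \<Rightarrow> bool" where
  "cont_sym_trilinear_l1 A \<longleftrightarrow> trilinear_l1 A \<and>
    (\<exists>C. \<forall>x\<in>l1. \<forall>y\<in>l1. \<forall>u\<in>l1. \<bar>A x y u\<bar> \<le> C * l1norm x * l1norm y * l1norm u) \<and>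
    (\<forall>x\<in>l1. \<forall>y\<in>l1. \<forall>u\<in>l1. A x y u = A y x u \<and> A x y u = A x u y)"

text \<open>"The Aron-Berner extension of A takes the value w at (z1,z2,z3)": for all nets
  weak-star converging to z1, z2, z3, the iterated limits (last variable first) exist
  and the outermost one equals w.\<close>

definition AB_ext_value ::
  "((nat \<Rightarrow> real) \<Rightarrow> (nat \<Rightarrow> real) \<Rightarrow> (nat \<Rightarrow> real) \<Rightarrow> real) \<Rightarrow>
   ((nat \<Rightarrow> real) \<Rightarrow> real) \<Rightarrow> ((nat \<Rightarrow> real) \<Rightarrow> real) \<Rightarrow> ((nat \<Rightarrow> real) \<Rightarrow> real) \<Rightarrow> real \<Rightarrow> bool" where
  "AB_ext_value A z1 z2 z3 w \<longleftrightarrow>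
    (\<forall>F1 F2 F3. wstar_conv F1 z1 \<and> wstar_conv F2 z2 \<and> wstar_conv F3 z3 \<longrightarrow>
       (\<forall>x\<in>l1. \<forall>y\<in>l1. \<exists>L. ((\<lambda>u. A x y u) \<longlongrightarrow> L) F3) \<and>
       (\<forall>x\<in>l1. \<exists>M. ((\<lambda>y. Lim F3 (\<lambda>u. A x y u)) \<longlongrightarrow> M) F2) \<and>
       ((\<lambda>x. Lim F2 (\<lambda>y. Lim F3 (\<lambda>u. A x y u))) \<longlongrightarrow> w) F1)"

end

theory Submission
  imports Defs
begin


definition ee :: "nat \<Rightarrow> nat \<Rightarrow> real" where "ee k = (\<lambda>n. if n = k then 1 else 0)"
definition tl1 :: "(nat \<Rightarrow> real) \<Rightarrow> nat \<Rightarrow> real" where "tl1 x k = (\<Sum>n. \<bar>x (n + k)\<bar>)"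

lemma l1_summ: "x \<in> l1 \<Longrightarrow> summable (\<lambda>n. \<bar>x n\<bar>)" by (simp add: l1_def)

lemma l1_add: "x \<in> l1 \<Longrightarrow> y \<in> l1 \<Longrightarrow> (\<lambda>n. x n + y n) \<in> l1"
proof -
  assume a: "x \<in> l1" "y \<in> l1"
  have "summable (\<lambda>n. \<bar>x n\<bar> + \<bar>y n\<bar>)" using a by (intro summable_add) (auto simp: l1_def)
  then show ?thesis unfolding l1_def
    by (auto intro!: summable_comparison_test[where g="\<lambda>n. \<bar>x n\<bar> + \<bar>y n\<bar>"])
qed

lemma l1_scale: "x \<in> l1 \<Longrightarrow> (\<lambda>n. r * x n) \<in> l1"
  unfolding l1_def by (auto simp: abs_mult intro: summable_mult)

lemma l1_dom: "x \<in> l1 \<Longrightarrow> (\<And>n. \<bar>y n\<bar> \<le> \<bar>x n\<bar>) \<Longrightarrow> y \<in> l1"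
  unfolding l1_def by (auto intro!: summable_comparison_test[where g="\<lambda>n. \<bar>x n\<bar>"])

lemma ee_l1: "ee k \<in> l1"
proof -
  have "summable (\<lambda>n. if n = k then (1::real) else 0)"
    using sums_single[of k "\<lambda>_. 1::real"] by (auto simp: summable_def)
  then show ?thesis unfolding l1_def ee_def by (simp add: if_distrib cong: if_cong)
qed

lemma l1norm_ee: "l1norm (ee k) = 1"
  unfolding l1norm_def ee_def
  using sums_single[of k "\<lambda>_. 1::real", THEN sums_unique] by (simp add: if_distrib cong: if_cong)

lemma l1norm_nonneg: "x \<in> l1 \<Longrightarrow> 0 \<le> l1norm x"
  unfolding l1norm_def l1_def by (simp add: suminf_nonneg)

lemma pair_summ: "x \<in> l1 \<Longrightarrow> (\<And>n. \<bar>f n\<bar> \<le> M) \<Longrightarrow> summable (\<lambda>n. \<bar>x n * f n\<bar>)"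
  unfolding l1_def
  by (rule summable_comparison_test[where g="\<lambda>n. \<bar>x n\<bar> * M"])
     (auto simp: abs_mult intro!: mult_left_mono summable_mult2)

lemma pair_summ': "x \<in> l1 \<Longrightarrow> (\<And>n. \<bar>f n\<bar> \<le> M) \<Longrightarrow> summable (\<lambda>n. x n * f n)"
  by (rule summable_rabs_cancel, rule pair_summ)

lemma pair_bound: assumes "x \<in> l1" "\<And>n. \<bar>f n\<bar> \<le> M" shows "\<bar>pair x f\<bar> \<le> M * l1norm x"
proof -
  have "\<bar>pair x f\<bar> \<le> (\<Sum>n. \<bar>x n * f n\<bar>)" unfolding pair_def
    by (rule summable_rabs[OF pair_summ[OF assms]])
  also have "\<dots> \<le> (\<Sum>n. \<bar>x n\<bar> * M)"
    using assms l1_summ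
    by (intro suminf_le pair_summ[OF assms] summable_mult2) (auto simp: abs_mult intro!: mult_left_mono)
  also have "\<dots> = M * l1norm x" unfolding l1norm_def
    using suminf_mult2[OF l1_summ[OF assms(1)], of M] by (simp add: mult.commute)
  finally show ?thesis .
qed

lemma tl1_tendsto: assumes "x \<in> l1" shows "tl1 x \<longlonglongrightarrow> 0"
proof -
  have s: "summable (\<lambda>n. \<bar>x n\<bar>)" using assms by (simp add: l1_def)
  have "(\<lambda>k. (\<Sum>n. \<bar>x n\<bar>) - (\<Sum>i<k. \<bar>x i\<bar>)) \<longlonglongrightarrow> (\<Sum>n. \<bar>x n\<bar>) - (\<Sum>n. \<bar>x n\<bar>)"
    by (intro tendsto_diff tendsto_const summable_LIMSEQ s)
  then show ?thesis unfolding tl1_def using suminf_minus_initial_segment[OF s] by simp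
qed

lemma tl1_le: assumes "x \<in> l1" shows "tl1 x k \<le> l1norm x"
proof -
  have s: "summable (\<lambda>n. \<bar>x n\<bar>)" using assms by (simp add: l1_def)
  show ?thesis unfolding tl1_def l1norm_def using suminf_minus_initial_segment[OF s, of k]
    by (simp add: sum_nonneg)
qed

lemma pair_tail_bound:
  assumes "x \<in> l1" "\<And>n. \<bar>f n\<bar> \<le> M" "\<And>n. n < k \<Longrightarrow> f n = 0"
  shows "\<bar>pair x f\<bar> \<le> M * tl1 x k"
proof -
  have s: "summable (\<lambda>n. x n * f n)" by (rule pair_summ'[OF assms(1,2)])
  have "pair x f = (\<Sum>n. x (n + k) * f (n + k))"
    unfolding pair_def using suminf_split_initial_segment[OF s, of k] assms(3) by simp
  also have "\<bar>\<dots>\<bar> \<le> (\<Sum>n. \<bar>x (n + k) * f (n + k)\<bar>)"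
    apply (rule summable_rabs) using pair_summ[OF assms(1,2)] summable_iff_shift[of "\<lambda>n. \<bar>x n * f n\<bar>" k] by simp
  also have "\<dots> \<le> (\<Sum>n. \<bar>x (n + k)\<bar> * M)"
    using assms l1_summ pair_summ[OF assms(1,2)] summable_iff_shift[of "\<lambda>n. \<bar>x n * f n\<bar>" k]
      summable_iff_shift[of "\<lambda>n. \<bar>x n\<bar>" k]
    by (intro suminf_le summable_mult2) (auto simp: abs_mult intro!: mult_left_mono)
  also have "\<dots> = M * tl1 x k" unfolding tl1_def
    using suminf_mult2[of "\<lambda>n. \<bar>x (n + k)\<bar>" M] l1_summ[OF assms(1)] summable_iff_shift[of "\<lambda>n. \<bar>x n\<bar>" k]
    by (simp add: mult.commute)
  finally show ?thesis .
qed

lemma pair_ee: "pair (ee k) f = f k"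
proof -
  have "(\<lambda>n. ee k n * f n) = (\<lambda>n. if n = k then f n else 0)" by (auto simp: ee_def)
  then show ?thesis unfolding pair_def using sums_single[of k f, THEN sums_unique] by simp
qed

lemma pair_add1: "x \<in> l1 \<Longrightarrow> y \<in> l1 \<Longrightarrow> (\<And>n. \<bar>f n\<bar> \<le> M) \<Longrightarrow>
  pair (\<lambda>n. x n + y n) f = pair x f + pair y f"
  unfolding pair_def using suminf_add[OF pair_summ'[of x f M] pair_summ'[of y f M]] by (simp add: algebra_simps)

lemma pair_add2: "x \<in> l1 \<Longrightarrow> (\<And>n. \<bar>f n\<bar> \<le> M) \<Longrightarrow> (\<And>n. \<bar>g n\<bar> \<le> M') \<Longrightarrow>
  pair x (\<lambda>n. f n + g n) = pair x f + pair x g"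
  unfolding pair_def using suminf_add[OF pair_summ'[of x f M] pair_summ'[of x g M']] by (simp add: algebra_simps)

lemma pair_scale1: "x \<in> l1 \<Longrightarrow> (\<And>n. \<bar>f n\<bar> \<le> M) \<Longrightarrow> pair (\<lambda>n. r * x n) f = r * pair x f"
  unfolding pair_def using suminf_mult[OF pair_summ', of x f M r] by (simp add: algebra_simps)

lemma pair_scale2: "x \<in> l1 \<Longrightarrow> (\<And>n. \<bar>f n\<bar> \<le> M) \<Longrightarrow> pair x (\<lambda>n. r * f n) = r * pair x f"
  unfolding pair_def using suminf_mult[OF pair_summ', of x f M r] by (simp add: algebra_simps)

lemma pair_partial: "x \<in> l1 \<Longrightarrow> (\<And>n. \<bar>f n\<bar> \<le> M) \<Longrightarrow> (\<lambda>m. \<Sum>j<m. x j * f j) \<longlonglongrightarrow> pair x f"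
  unfolding pair_def by (rule summable_LIMSEQ[OF pair_summ'])

lemma linf_bound: "f \<in> linf \<Longrightarrow> \<exists>M\<ge>0. \<forall>n. \<bar>f n\<bar> \<le> M"
proof -
  assume "f \<in> linf" then obtain B where B: "\<forall>n. \<bar>f n\<bar> \<le> B" unfolding linf_def by blast
  then have "0 \<le> B" by (meson abs_ge_zero order_trans)
  with B show ?thesis by blast
qed

lemma linfI: "(\<And>n. \<bar>f n\<bar> \<le> M) \<Longrightarrow> f \<in> linf" unfolding linf_def by blast



definition ps :: "(nat \<Rightarrow> real) \<Rightarrow> (nat \<Rightarrow> real) \<Rightarrow> nat \<Rightarrow> real" where
  "ps a x j = (\<Sum>i<j. x i * a i)"
definition GG where "GG a b p q m = (\<Sum>j<m. q j * (b j * ps a p j))"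
definition BB where "BB a b c p q r = pair r (\<lambda>m. c m * GG a b p q m)"
definition AA where "AA a b c x y u = BB a b c x y u + BB a b c x u y + BB a b c y x u
   + BB a b c y u x + BB a b c u x y + BB a b c u y x"

lemma finsum_bound: assumes "x \<in> l1" "\<And>j. \<bar>f j\<bar> \<le> M"
  shows "\<bar>\<Sum>j<m. x j * f j\<bar> \<le> M * l1norm x"
proof -
  have M: "0 \<le> M" using assms(2)[of 0] by linarith
  have "\<bar>\<Sum>j<m. x j * f j\<bar> \<le> (\<Sum>j<m. \<bar>x j\<bar> * M)"
    by (rule order_trans[OF sum_abs]) (auto intro!: sum_mono simp: abs_mult intro: mult_left_mono assms)
  also have "\<dots> = M * (\<Sum>j<m. \<bar>x j\<bar>)" by (simp add: sum_distrib_left mult.commute)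
  also have "\<dots> \<le> M * l1norm x" unfolding l1norm_def
    using M l1_summ[OF assms(1)] by (intro mult_left_mono sum_le_suminf) auto
  finally show ?thesis .
qed

locale abc =
  fixes a b c :: "nat \<Rightarrow> real" and Ma Mb Mc :: real
  assumes ba: "\<And>n. \<bar>a n\<bar> \<le> Ma" and bb: "\<And>n. \<bar>b n\<bar> \<le> Mb" and bc: "\<And>n. \<bar>c n\<bar> \<le> Mc"
begin

lemma Ma: "0 \<le> Ma" using ba[of 0] by linarith
lemma Mb: "0 \<le> Mb" using bb[of 0] by linarith
lemma Mc: "0 \<le> Mc" using bc[of 0] by linarith

lemma ps_bound: "x \<in> l1 \<Longrightarrow> \<bar>ps a x j\<bar> \<le> Ma * l1norm x"
  unfolding ps_def by (rule finsum_bound) (auto intro: ba)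

lemma ps_add: "ps a (\<lambda>n. x n + y n) j = ps a x j + ps a y j"
  unfolding ps_def by (simp add: sum.distrib algebra_simps)
lemma ps_scale: "ps a (\<lambda>n. r * x n) j = r * ps a x j"
  unfolding ps_def by (simp add: sum_distrib_left algebra_simps)
lemma ps_ee0: "j \<le> k \<Longrightarrow> ps a (ee k) j = 0"
  unfolding ps_def ee_def by (intro sum.neutral) auto

lemma GG_bound: "p \<in> l1 \<Longrightarrow> q \<in> l1 \<Longrightarrow> \<bar>GG a b p q m\<bar> \<le> Mb * Ma * l1norm p * l1norm q"
proof -
  assume p: "p \<in> l1" and q: "q \<in> l1"
  have "\<bar>b j * ps a p j\<bar> \<le> Mb * (Ma * l1norm p)" for j
    unfolding abs_mult by (intro mult_mono bb ps_bound p) (auto simp: Mb)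
  then show ?thesis unfolding GG_def using finsum_bound[OF q, of "\<lambda>j. b j * ps a p j" "Mb * (Ma * l1norm p)" m]
    by (simp add: mult_ac)
qed

lemma GG_add1: "GG a b (\<lambda>n. x n + y n) q m = GG a b x q m + GG a b y q m"
  unfolding GG_def by (simp add: ps_add sum.distrib algebra_simps)
lemma GG_scale1: "GG a b (\<lambda>n. r * x n) q m = r * GG a b x q m"
  unfolding GG_def by (simp add: ps_scale sum_distrib_left algebra_simps)
lemma GG_add2: "GG a b p (\<lambda>n. x n + y n) m = GG a b p x m + GG a b p y m"
  unfolding GG_def by (simp add: sum.distrib algebra_simps)
lemma GG_scale2: "GG a b p (\<lambda>n. r * x n) m = r * GG a b p x m"
  unfolding GG_def by (simp add: sum_distrib_left algebra_simps)
lemma GG_ee1: "m \<le> k \<Longrightarrow> GG a b (ee k) q m = 0"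
  unfolding GG_def by (intro sum.neutral) (auto simp: ps_ee0)
lemma GG_ee2: "m \<le> k \<Longrightarrow> GG a b p (ee k) m = 0"
  unfolding GG_def ee_def by (intro sum.neutral) auto

lemma cGG_bound: "p \<in> l1 \<Longrightarrow> q \<in> l1 \<Longrightarrow> \<bar>c m * GG a b p q m\<bar> \<le> Mc * (Mb * Ma * l1norm p * l1norm q)"
  unfolding abs_mult by (intro mult_mono bc GG_bound) (auto simp: Mc)

lemma BB_bound: "p \<in> l1 \<Longrightarrow> q \<in> l1 \<Longrightarrow> r \<in> l1 \<Longrightarrow>
   \<bar>BB a b c p q r\<bar> \<le> Mc * Mb * Ma * l1norm p * l1norm q * l1norm r"
  unfolding BB_def using pair_bound[of r "\<lambda>m. c m * GG a b p q m", OF _ cGG_bound] by (simp add: mult_ac)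

lemma BB_tail: "p \<in> l1 \<Longrightarrow> q \<in> l1 \<Longrightarrow> r \<in> l1 \<Longrightarrow> (\<And>m. m < k \<Longrightarrow> GG a b p q m = 0) \<Longrightarrow>
   \<bar>BB a b c p q r\<bar> \<le> Mc * (Mb * Ma * l1norm p * l1norm q) * tl1 r k"
  unfolding BB_def by (rule pair_tail_bound) (auto intro: cGG_bound)

lemma BB_ee3: "BB a b c p q (ee k) = c k * GG a b p q k"
  unfolding BB_def pair_ee ..

lemma BB_add1: "x \<in> l1 \<Longrightarrow> y \<in> l1 \<Longrightarrow> q \<in> l1 \<Longrightarrow> r \<in> l1 \<Longrightarrow>
  BB a b c (\<lambda>n. x n + y n) q r = BB a b c x q r + BB a b c y q r"
  unfolding BB_def GG_add1 distrib_left by (rule pair_add2) (auto intro: cGG_bound)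
lemma BB_add2: "x \<in> l1 \<Longrightarrow> y \<in> l1 \<Longrightarrow> p \<in> l1 \<Longrightarrow> r \<in> l1 \<Longrightarrow>
  BB a b c p (\<lambda>n. x n + y n) r = BB a b c p x r + BB a b c p y r"
  unfolding BB_def GG_add2 distrib_left by (rule pair_add2) (auto intro: cGG_bound)
lemma BB_add3: "x \<in> l1 \<Longrightarrow> y \<in> l1 \<Longrightarrow> p \<in> l1 \<Longrightarrow> q \<in> l1 \<Longrightarrow>
  BB a b c p q (\<lambda>n. x n + y n) = BB a b c p q x + BB a b c p q y"
  unfolding BB_def by (rule pair_add1) (auto intro: cGG_bound)
lemma BB_scale1: "x \<in> l1 \<Longrightarrow> q \<in> l1 \<Longrightarrow> r \<in> l1 \<Longrightarrow>
  BB a b c (\<lambda>n. s * x n) q r = s * BB a b c x q r"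
proof -
  assume h: "x \<in> l1" "q \<in> l1" "r \<in> l1"
  have "(\<lambda>m. c m * GG a b (\<lambda>n. s * x n) q m) = (\<lambda>m. s * (c m * GG a b x q m))"
    by (simp add: GG_scale1 mult_ac)
  then show ?thesis unfolding BB_def using h by (simp add: pair_scale2[OF _ cGG_bound])
qed
lemma BB_scale2: "x \<in> l1 \<Longrightarrow> p \<in> l1 \<Longrightarrow> r \<in> l1 \<Longrightarrow>
  BB a b c p (\<lambda>n. s * x n) r = s * BB a b c p x r"
proof -
  assume h: "x \<in> l1" "p \<in> l1" "r \<in> l1"
  have "(\<lambda>m. c m * GG a b p (\<lambda>n. s * x n) m) = (\<lambda>m. s * (c m * GG a b p x m))"
    by (simp add: GG_scale2 mult_ac)
  then show ?thesis unfolding BB_def using h by (simp add: pair_scale2[OF _ cGG_bound])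
qed
lemma BB_scale3: "x \<in> l1 \<Longrightarrow> p \<in> l1 \<Longrightarrow> q \<in> l1 \<Longrightarrow>
  BB a b c p q (\<lambda>n. s * x n) = s * BB a b c p q x"
  unfolding BB_def by (rule pair_scale1) (auto intro: cGG_bound)

lemmas BB_lin = BB_add1 BB_add2 BB_add3 BB_scale1 BB_scale2 BB_scale3

lemma AA_lin:
  assumes "x \<in> l1" "x' \<in> l1" "y \<in> l1" "u \<in> l1"
  shows "AA a b c (\<lambda>n. x n + x' n) y u = AA a b c x y u + AA a b c x' y u"
    "AA a b c (\<lambda>n. s * x n) y u = s * AA a b c x y u"
    "AA a b c y (\<lambda>n. x n + x' n) u = AA a b c y x u + AA a b c y x' u"
    "AA a b c y (\<lambda>n. s * x n) u = s * AA a b c y x u"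
    "AA a b c y u (\<lambda>n. x n + x' n) = AA a b c y u x + AA a b c y u x'"
    "AA a b c y u (\<lambda>n. s * x n) = s * AA a b c y u x"
  unfolding AA_def using assms by (simp_all add: BB_lin algebra_simps)

lemma AA_bound: "x \<in> l1 \<Longrightarrow> y \<in> l1 \<Longrightarrow> u \<in> l1 \<Longrightarrow>
   \<bar>AA a b c x y u\<bar> \<le> (6 * (Mc * Mb * Ma)) * l1norm x * l1norm y * l1norm u"
proof -
  assume h: "x \<in> l1" "y \<in> l1" "u \<in> l1"
  note B = BB_bound[OF h(1,2,3)] BB_bound[OF h(1,3,2)] BB_bound[OF h(2,1,3)]
    BB_bound[OF h(2,3,1)] BB_bound[OF h(3,1,2)] BB_bound[OF h(3,2,1)]
  define K where "K = Mc * Mb * Ma * l1norm x * l1norm y * l1norm u"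
  have B': "\<bar>BB a b c x y u\<bar> \<le> K" "\<bar>BB a b c x u y\<bar> \<le> K" "\<bar>BB a b c y x u\<bar> \<le> K"
    "\<bar>BB a b c y u x\<bar> \<le> K" "\<bar>BB a b c u x y\<bar> \<le> K" "\<bar>BB a b c u y x\<bar> \<le> K"
    using B unfolding K_def by (simp_all only: mult_ac)
  have "\<bar>AA a b c x y u\<bar> \<le> 6 * K" using B' unfolding AA_def abs_le_iff by linarith
  then show ?thesis unfolding K_def by (simp only: mult_ac)
qed

lemma AA_trilinear: "trilinear_l1 (AA a b c)"
  unfolding trilinear_l1_def by (intro ballI allI conjI) (simp_all add: AA_lin)

lemma AA_cont_sym: "cont_sym_trilinear_l1 (AA a b c)"
  unfolding cont_sym_trilinear_l1_def
proof (intro conjI AA_trilinear exI ballI)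
  fix x y u assume "x \<in> l1" "y \<in> l1" "u \<in> l1"
  then show "\<bar>AA a b c x y u\<bar> \<le> (6 * (Mc * Mb * Ma)) * l1norm x * l1norm y * l1norm u" by (rule AA_bound)
  show "AA a b c x y u = AA a b c y x u" unfolding AA_def by linarith
  show "AA a b c x y u = AA a b c x u y" unfolding AA_def by linarith
qed

end


lemma repr:
  assumes add: "\<And>u v. u \<in> l1 \<Longrightarrow> v \<in> l1 \<Longrightarrow> \<phi> (\<lambda>n. u n + v n) = \<phi> u + \<phi> v"
  and hom: "\<And>u r. u \<in> l1 \<Longrightarrow> \<phi> (\<lambda>n. r * u n) = r * \<phi> u"
  and bnd: "\<And>u. u \<in> l1 \<Longrightarrow> \<bar>\<phi> u\<bar> \<le> C * l1norm u"
  and u: "u \<in> l1"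
  shows "\<phi> u = pair u (\<lambda>k. \<phi> (ee k))"
proof -
  define t where "t N = (\<lambda>n. if n < N then u n else (0::real))" for N
  define r where "r N = (\<lambda>n. if n < N then 0 else u n)" for N
  have tl: "t N \<in> l1" for N by (rule l1_dom[OF u]) (auto simp: t_def)
  have rl: "r N \<in> l1" for N by (rule l1_dom[OF u]) (auto simp: r_def)
  have z: "\<phi> (\<lambda>n. 0) = 0" using hom[OF u, of 0] by simp
  have ee_b: "\<bar>\<phi> (ee k)\<bar> \<le> C" for k using bnd[OF ee_l1, of k] by (simp add: l1norm_ee)
  have tsum: "\<phi> (t N) = (\<Sum>k<N. u k * \<phi> (ee k))" for N
  proof (induction N)
    case 0 then show ?case using z by (simp add: t_def)
  next
    case (Suc N)
    have "t (Suc N) = (\<lambda>n. t N n + u N * ee N n)" by (auto simp: t_def ee_def less_Suc_eq)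
    then have "\<phi> (t (Suc N)) = \<phi> (t N) + \<phi> (\<lambda>n. u N * ee N n)"
      using add[OF tl l1_scale[OF ee_l1]] by simp
    also have "\<dots> = \<phi> (t N) + u N * \<phi> (ee N)" using hom[OF ee_l1] by simp
    finally show ?case using Suc by simp
  qed
  have split: "\<phi> u = \<phi> (t N) + \<phi> (r N)" for N
  proof -
    have "u = (\<lambda>n. t N n + r N n)" by (auto simp: t_def r_def)
    then have "\<phi> u = \<phi> (\<lambda>n. t N n + r N n)" by simp
    then show ?thesis using add[OF tl rl] by simp
  qed
  have rn: "l1norm (r N) = tl1 u N" for N
  proof -
    have s: "summable (\<lambda>n. \<bar>r N n\<bar>)" using rl l1_summ by blast
    show ?thesis unfolding l1norm_def tl1_def using suminf_split_initial_segment[OF s, of N]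
      by (simp add: r_def)
  qed
  have "(\<lambda>N. \<phi> (r N)) \<longlonglongrightarrow> 0"
  proof (rule Lim_null_comparison)
    show "\<forall>\<^sub>F N in sequentially. norm (\<phi> (r N)) \<le> C * tl1 u N" using bnd[OF rl] rn by simp
    show "(\<lambda>N. C * tl1 u N) \<longlonglongrightarrow> 0" using tendsto_mult_right_zero[OF tl1_tendsto[OF u]] by simp
  qed
  then have "(\<lambda>N. \<phi> u - \<phi> (r N)) \<longlonglongrightarrow> \<phi> u - 0" by (intro tendsto_diff tendsto_const)
  moreover have "(\<lambda>N. \<phi> u - \<phi> (r N)) = (\<lambda>N. \<Sum>k<N. u k * \<phi> (ee k))"
    using split tsum by (auto simp: algebra_simps)
  ultimately have 1: "(\<lambda>N. \<Sum>k<N. u k * \<phi> (ee k)) \<longlonglongrightarrow> \<phi> u" by simp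
  have 2: "(\<lambda>N. \<Sum>k<N. u k * \<phi> (ee k)) \<longlonglongrightarrow> pair u (\<lambda>k. \<phi> (ee k))"
    by (rule pair_partial[OF u ee_b])
  show ?thesis using LIMSEQ_unique[OF 1 2] .
qed

lemma perp_eval:
  assumes z: "c0_perp z" and d: "d \<in> linf" and g: "g \<longlonglongrightarrow> L" and v: "v \<longlonglongrightarrow> 0"
  shows "z (\<lambda>k. d k * g k + v k) = L * z d"
proof -
  have zb: "l1_bidual z" and z0: "\<And>f. f \<in> c0 \<Longrightarrow> z f = 0" using z by (auto simp: c0_perp_def)
  obtain M where M: "\<And>n. \<bar>d n\<bar> \<le> M" using d unfolding linf_def by blast
  obtain Kg where Kg: "\<And>n. norm (g n - L) \<le> Kg"
    using convergent_imp_Bseq[of "\<lambda>n. g n - L"] g unfolding Bseq_def convergent_def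
    by (metis LIM_zero less_eq_real_def)
  obtain Kv where Kv: "\<And>n. norm (v n) \<le> Kv"
    using convergent_imp_Bseq[of v] v unfolding Bseq_def convergent_def by (metis less_eq_real_def)
  have M0: "0 \<le> M" using M[of 0] by linarith
  have h1: "(\<lambda>k. L * d k) \<in> linf" using M by (intro linfI[where M="\<bar>L\<bar> * M"]) (auto simp: abs_mult intro: mult_left_mono)
  have gz: "(\<lambda>n. g n - L) \<longlonglongrightarrow> 0" using g by (rule LIM_zero)
  have "(\<lambda>k. d k * (g k - L)) \<longlonglongrightarrow> 0"
  proof (rule Lim_null_comparison)
    show "\<forall>\<^sub>F k in sequentially. norm (d k * (g k - L)) \<le> M * norm (g k - L)"
      using M by (auto simp: abs_mult intro!: always_eventually mult_right_mono)
    show "(\<lambda>k. M * norm (g k - L)) \<longlonglongrightarrow> 0" using tendsto_mult_right_zero[OF tendsto_norm_zero[OF gz]] by simp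
  qed
  then have c: "(\<lambda>k. d k * (g k - L) + v k) \<in> c0" unfolding c0_def using tendsto_add_zero[OF _ v] by auto
  have h2: "(\<lambda>k. d k * (g k - L) + v k) \<in> linf"
    using M Kg Kv M0 by (intro linfI[where M="M * Kg + Kv"]) (auto simp: abs_mult intro!: abs_triangle_ineq[THEN order_trans] add_mono mult_mono)
  have e: "(\<lambda>k. d k * g k + v k) = (\<lambda>k. L * d k + (d k * (g k - L) + v k))" by (auto simp: algebra_simps)
  have "z (\<lambda>k. d k * g k + v k) = z (\<lambda>k. L * d k) + z (\<lambda>k. d k * (g k - L) + v k)"
  proof -
    have add: "\<forall>f\<in>linf. \<forall>g\<in>linf. z (\<lambda>n. f n + g n) = z f + z g" using zb unfolding l1_bidual_def by blast
    show ?thesis unfolding e using add[rule_format, OF h1 h2] by simp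
  qed
  also have "\<dots> = L * z d"
  proof -
    have hm: "\<forall>f\<in>linf. \<forall>c. z (\<lambda>n. c * f n) = c * z f" using zb unfolding l1_bidual_def by blast
    show ?thesis using z0[OF c] hm[rule_format, OF d, of L] by simp
  qed
  finally show ?thesis .
qed

lemma wstar_lim:
  assumes "wstar_conv F z" "w \<in> linf" "\<And>u. u \<in> l1 \<Longrightarrow> \<phi> u = pair u w"
  shows "(\<phi> \<longlongrightarrow> z w) F"
proof -
  have "((\<lambda>u. pair u w) \<longlongrightarrow> z w) F" using assms by (auto simp: wstar_conv_def)
  moreover have "\<forall>\<^sub>F u in F. pair u w = \<phi> u"
  proof -
    have "\<forall>\<^sub>F u in F. u \<in> l1" using assms(1) unfolding wstar_conv_def by blast
    then show ?thesis by (rule eventually_mono) (simp add: assms(3))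
  qed
  ultimately show ?thesis using tendsto_cong[of "\<lambda>u. pair u w" \<phi> F "z w"] by simp
qed



definition LL where "LL a b p q = pair q (\<lambda>j. b j * ps a p j)"

context abc begin

lemma bps: "p \<in> l1 \<Longrightarrow> \<bar>b j * ps a p j\<bar> \<le> Mb * (Ma * l1norm p)"
  unfolding abs_mult by (intro mult_mono bb ps_bound) (auto simp: Mb)

lemma GG_LL: "p \<in> l1 \<Longrightarrow> q \<in> l1 \<Longrightarrow> (\<lambda>m. GG a b p q m) \<longlonglongrightarrow> LL a b p q"
  unfolding GG_def LL_def by (rule pair_partial) (auto intro: bps)

lemma LL_bound: "p \<in> l1 \<Longrightarrow> q \<in> l1 \<Longrightarrow> \<bar>LL a b p q\<bar> \<le> Mb * (Ma * l1norm p) * l1norm q"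
  unfolding LL_def by (rule pair_bound) (auto intro: bps)

lemma LL_ee1: "x \<in> l1 \<Longrightarrow> \<bar>LL a b (ee k) x\<bar> \<le> Mb * (Ma * 1) * tl1 x (Suc k)"
proof -
  assume x: "x \<in> l1"
  have "\<And>j. \<bar>b j * ps a (ee k) j\<bar> \<le> Mb * (Ma * 1)" using bps[OF ee_l1[of k]] by (simp add: l1norm_ee)
  then show ?thesis unfolding LL_def
    by (rule pair_tail_bound[OF x]) (simp add: ps_ee0)
qed

lemma LL_ee2: "LL a b p (ee k) = b k * ps a p k"
  unfolding LL_def pair_ee ..

lemma LL_lin:
  assumes "x \<in> l1" "x' \<in> l1" "y \<in> l1"
  shows "LL a b (\<lambda>n. x n + x' n) y = LL a b x y + LL a b x' y"
    "LL a b (\<lambda>n. s * x n) y = s * LL a b x y"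
    "LL a b y (\<lambda>n. x n + x' n) = LL a b y x + LL a b y x'"
    "LL a b y (\<lambda>n. s * x n) = s * LL a b y x"
proof -
  show "LL a b (\<lambda>n. x n + x' n) y = LL a b x y + LL a b x' y"
    unfolding LL_def ps_add distrib_left using assms by (intro pair_add2) (auto intro: bps)
  have "(\<lambda>j. b j * ps a (\<lambda>n. s * x n) j) = (\<lambda>j. s * (b j * ps a x j))" by (simp add: ps_scale mult_ac)
  then show "LL a b (\<lambda>n. s * x n) y = s * LL a b x y"
    unfolding LL_def using assms by (simp add: pair_scale2[OF _ bps])
  show "LL a b y (\<lambda>n. x n + x' n) = LL a b y x + LL a b y x'"
    unfolding LL_def using assms by (intro pair_add1) (auto intro: bps)
  show "LL a b y (\<lambda>n. s * x n) = s * LL a b y x"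
    unfolding LL_def using assms by (intro pair_scale1) (auto intro: bps)
qed

lemma stage1:
  assumes x: "x \<in> l1" and y: "y \<in> l1" and F: "wstar_conv F z" and z: "c0_perp z"
  shows "((\<lambda>u. AA a b c x y u) \<longlongrightarrow> z c * (LL a b x y + LL a b y x)) F"
proof -
  define w where "w k = AA a b c x y (ee k)" for k
  have rep: "AA a b c x y u = pair u w" if u: "u \<in> l1" for u
    unfolding w_def
  proof (rule repr[where C="(6 * (Mc * Mb * Ma)) * l1norm x * l1norm y"])
    fix p q assume p: "p \<in> l1" and q: "q \<in> l1"
    show "AA a b c x y (\<lambda>n. p n + q n) = AA a b c x y p + AA a b c x y q" by (rule AA_lin(5)[OF p q x y])
  next
    fix p s assume p: "p \<in> l1"
    show "AA a b c x y (\<lambda>n. s * p n) = s * AA a b c x y p" by (rule AA_lin(6)[OF p p x y])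
  next
    fix p assume p: "p \<in> l1"
    show "\<bar>AA a b c x y p\<bar> \<le> 6 * (Mc * Mb * Ma) * l1norm x * l1norm y * l1norm p"
      by (rule AA_bound[OF x y p])
  qed (rule u)
  have wl: "w \<in> linf"
    using AA_bound[OF x y ee_l1] unfolding w_def by (intro linfI) (simp add: l1norm_ee)
  have lim: "((\<lambda>u. AA a b c x y u) \<longlongrightarrow> z w) F" by (rule wstar_lim[OF F wl rep])
  define g where "g k = GG a b x y k + GG a b y x k" for k
  define v where "v k = BB a b c x (ee k) y + BB a b c y (ee k) x + BB a b c (ee k) x y + BB a b c (ee k) y x" for k
  have we: "w = (\<lambda>k. c k * g k + v k)"
    by (auto simp: w_def g_def v_def AA_def BB_ee3 algebra_simps)
  have g: "g \<longlonglongrightarrow> LL a b x y + LL a b y x" unfolding g_def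
    by (intro tendsto_add GG_LL x y)
  define K where "K p = Mc * (Mb * Ma * l1norm p * 1)" for p
  define K' where "K' p = Mc * (Mb * Ma * 1 * l1norm p)" for p
  have v: "v \<longlonglongrightarrow> 0"
  proof (rule Lim_null_comparison)
    have "\<bar>v k\<bar> \<le> K x * tl1 y k + K y * tl1 x k + K' x * tl1 y k + K' y * tl1 x k" for k
    proof -
      have "\<bar>BB a b c x (ee k) y\<bar> \<le> K x * tl1 y k"
        unfolding K_def using BB_tail[OF x ee_l1 y, of k] by (simp add: l1norm_ee GG_ee2)
      moreover have "\<bar>BB a b c y (ee k) x\<bar> \<le> K y * tl1 x k"
        unfolding K_def using BB_tail[OF y ee_l1 x, of k] by (simp add: l1norm_ee GG_ee2)
      moreover have "\<bar>BB a b c (ee k) x y\<bar> \<le> K' x * tl1 y k"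
        unfolding K'_def using BB_tail[OF ee_l1 x y, of k] by (simp add: l1norm_ee GG_ee1)
      moreover have "\<bar>BB a b c (ee k) y x\<bar> \<le> K' y * tl1 x k"
        unfolding K'_def using BB_tail[OF ee_l1 y x, of k] by (simp add: l1norm_ee GG_ee1)
      ultimately show ?thesis unfolding v_def by linarith
    qed
    then show "\<forall>\<^sub>F k in sequentially. norm (v k) \<le> K x * tl1 y k + K y * tl1 x k + K' x * tl1 y k + K' y * tl1 x k"
      by simp
    show "(\<lambda>k. K x * tl1 y k + K y * tl1 x k + K' x * tl1 y k + K' y * tl1 x k) \<longlonglongrightarrow> 0"
      using tl1_tendsto[OF x] tl1_tendsto[OF y]
      by (auto intro!: tendsto_add_zero tendsto_mult_right_zero)
  qed
  have "z w = (LL a b x y + LL a b y x) * z c"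
    unfolding we by (rule perp_eval[OF z _ g v]) (use bc in \<open>auto intro: linfI\<close>)
  then show ?thesis using lim by (simp add: mult.commute)
qed

end


context abc begin

lemma stage2:
  assumes x: "x \<in> l1" and F: "wstar_conv F z" and z: "c0_perp z"
  shows "((\<lambda>y. K * (LL a b x y + LL a b y x)) \<longlongrightarrow> (K * pair x a) * z b) F"
proof -
  define \<psi> where "\<psi> y = K * (LL a b x y + LL a b y x)" for y
  define w where "w k = \<psi> (ee k)" for k
  have bd: "\<bar>\<psi> y\<bar> \<le> (\<bar>K\<bar> * (2 * Mb * Ma * l1norm x)) * l1norm y" if y: "y \<in> l1" for y
  proof -
    have "\<bar>LL a b x y + LL a b y x\<bar> \<le> 2 * Mb * Ma * l1norm x * l1norm y"
    proof -
      have "\<bar>LL a b x y\<bar> \<le> Mb * Ma * l1norm x * l1norm y" "\<bar>LL a b y x\<bar> \<le> Mb * Ma * l1norm x * l1norm y"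
        using LL_bound[OF x y] LL_bound[OF y x] by (simp_all only: mult_ac)
      then show ?thesis unfolding abs_le_iff by linarith
    qed
    then have "\<bar>K\<bar> * \<bar>LL a b x y + LL a b y x\<bar> \<le> \<bar>K\<bar> * (2 * Mb * Ma * l1norm x * l1norm y)"
      by (rule mult_left_mono) simp
    then show ?thesis unfolding \<psi>_def abs_mult by (simp add: mult_ac)
  qed
  have rep: "\<psi> y = pair y w" if y: "y \<in> l1" for y
    unfolding w_def
  proof (rule repr[OF _ _ bd y])
    fix u v assume u: "u \<in> l1" and v: "v \<in> l1"
    show "\<psi> (\<lambda>n. u n + v n) = \<psi> u + \<psi> v"
      unfolding \<psi>_def LL_lin(1)[OF u v x] LL_lin(3)[OF u v x] by (simp add: distrib_left)
  next
    fix u r assume u: "u \<in> l1"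
    show "\<psi> (\<lambda>n. r * u n) = r * \<psi> u"
      unfolding \<psi>_def LL_lin(2)[OF u u x] LL_lin(4)[OF u u x] by (simp add: algebra_simps)
  qed
  have wl: "w \<in> linf"
    using bd[OF ee_l1] unfolding w_def by (intro linfI) (simp add: l1norm_ee)
  have lim: "(\<psi> \<longlongrightarrow> z w) F" by (rule wstar_lim[OF F wl rep])
  have we: "w = (\<lambda>k. b k * (K * ps a x k) + K * LL a b (ee k) x)"
    by (auto simp: w_def \<psi>_def LL_ee2 algebra_simps)
  have g: "(\<lambda>k. K * ps a x k) \<longlonglongrightarrow> K * pair x a"
    unfolding ps_def by (intro tendsto_mult tendsto_const pair_partial[OF x]) (rule ba)
  have v: "(\<lambda>k. K * LL a b (ee k) x) \<longlonglongrightarrow> 0"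
  proof (rule Lim_null_comparison)
    show "\<forall>\<^sub>F k in sequentially. norm (K * LL a b (ee k) x) \<le> \<bar>K\<bar> * (Mb * (Ma * 1) * tl1 x (Suc k))"
      using LL_ee1[OF x] by (auto simp: abs_mult intro!: always_eventually mult_left_mono)
    have "(\<lambda>k. tl1 x (Suc k)) \<longlonglongrightarrow> 0" using tl1_tendsto[OF x] by (rule LIMSEQ_Suc)
    then show "(\<lambda>k. \<bar>K\<bar> * (Mb * (Ma * 1) * tl1 x (Suc k))) \<longlonglongrightarrow> 0"
      by (auto intro!: tendsto_mult_right_zero)
  qed
  have "z w = K * pair x a * z b"
    unfolding we by (rule perp_eval[OF z _ g v]) (use bb in \<open>auto intro: linfI\<close>)
  then show ?thesis using lim unfolding \<psi>_def by simp
qed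

lemma stage3:
  assumes F: "wstar_conv F z" and z: "l1_bidual z"
  shows "((\<lambda>x. K * pair x a) \<longlongrightarrow> K * z a) F"
proof -
  have al: "a \<in> linf" using ba by (rule linfI)
  have "((\<lambda>x. K * pair x a) \<longlongrightarrow> z (\<lambda>n. K * a n)) F"
  proof (rule wstar_lim[OF F])
    show "(\<lambda>n. K * a n) \<in> linf"
      by (rule linfI[where M="\<bar>K\<bar> * Ma"]) (simp add: abs_mult mult_left_mono ba)
    fix u assume u: "u \<in> l1"
    show "K * pair u a = pair u (\<lambda>n. K * a n)" by (rule pair_scale2[OF u ba, symmetric])
  qed
  moreover have "z (\<lambda>n. K * a n) = K * z a" using z al unfolding l1_bidual_def by blast
  ultimately show ?thesis by simp
qed

lemma main_AB:
  assumes z1: "l1_bidual z1" and z2: "c0_perp z2" and z3: "c0_perp z3"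
  shows "AB_ext_value (AA a b c) z1 z2 z3 (z1 a * z2 b * z3 c)"
  unfolding AB_ext_value_def
proof (intro allI impI conjI ballI)
  fix F1 F2 F3 assume F: "wstar_conv F1 z1 \<and> wstar_conv F2 z2 \<and> wstar_conv F3 z3"
  then have F1: "wstar_conv F1 z1" and F2: "wstar_conv F2 z2" and F3: "wstar_conv F3 z3" by auto
  have F3b: "F3 \<noteq> bot" and F2b: "F2 \<noteq> bot" using F2 F3 by (auto simp: wstar_conv_def)
  have L3: "Lim F3 (\<lambda>u. AA a b c x y u) = z3 c * (LL a b x y + LL a b y x)" if "x \<in> l1" "y \<in> l1" for x y
    using tendsto_Lim[OF _ stage1[OF that F3 z3]] F3b by simp
  fix x y assume x: "x \<in> l1" and y: "y \<in> l1"
  show "\<exists>L. ((\<lambda>u. AA a b c x y u) \<longlongrightarrow> L) F3" using stage1[OF x y F3 z3] by blast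
next
  fix F1 F2 F3 assume F: "wstar_conv F1 z1 \<and> wstar_conv F2 z2 \<and> wstar_conv F3 z3"
  then have F1: "wstar_conv F1 z1" and F2: "wstar_conv F2 z2" and F3: "wstar_conv F3 z3" by auto
  have F3b: "F3 \<noteq> bot" and F2b: "F2 \<noteq> bot" using F2 F3 by (auto simp: wstar_conv_def)
  have L3: "Lim F3 (\<lambda>u. AA a b c x y u) = z3 c * (LL a b x y + LL a b y x)" if "x \<in> l1" "y \<in> l1" for x y
    using tendsto_Lim[OF _ stage1[OF that F3 z3]] F3b by simp
  have T2: "((\<lambda>y. Lim F3 (\<lambda>u. AA a b c x y u)) \<longlongrightarrow> (z3 c * pair x a) * z2 b) F2" if x: "x \<in> l1" for x
  proof -
    have "\<forall>\<^sub>F y in F2. z3 c * (LL a b x y + LL a b y x) = Lim F3 (\<lambda>u. AA a b c x y u)"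
    proof -
      have "\<forall>\<^sub>F y in F2. y \<in> l1" using F2 unfolding wstar_conv_def by blast
      then show ?thesis by (rule eventually_mono) (simp add: L3 x)
    qed
    then show ?thesis using stage2[OF x F2 z2, of "z3 c"]
      tendsto_cong[of "\<lambda>y. z3 c * (LL a b x y + LL a b y x)" "\<lambda>y. Lim F3 (\<lambda>u. AA a b c x y u)" F2] by simp
  qed
  {
    fix x assume x: "x \<in> l1"
    show "\<exists>M. ((\<lambda>y. Lim F3 (\<lambda>u. AA a b c x y u)) \<longlongrightarrow> M) F2" using T2[OF x] by blast
  }
  have "\<forall>\<^sub>F x in F1. (z3 c * z2 b) * pair x a = Lim F2 (\<lambda>y. Lim F3 (\<lambda>u. AA a b c x y u))"
  proof -
    have "\<forall>\<^sub>F x in F1. x \<in> l1" using F1 unfolding wstar_conv_def by blast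
    then show ?thesis
    proof (rule eventually_mono)
      fix x assume x: "x \<in> l1"
      have "Lim F2 (\<lambda>y. Lim F3 (\<lambda>u. AA a b c x y u)) = (z3 c * pair x a) * z2 b"
        using tendsto_Lim[OF _ T2[OF x]] F2b by simp
      then show "(z3 c * z2 b) * pair x a = Lim F2 (\<lambda>y. Lim F3 (\<lambda>u. AA a b c x y u))" by (simp add: mult_ac)
    qed
  qed
  moreover have "((\<lambda>x. (z3 c * z2 b) * pair x a) \<longlongrightarrow> (z3 c * z2 b) * z1 a) F1"
    by (rule stage3[OF F1 z1])
  ultimately have "((\<lambda>x. Lim F2 (\<lambda>y. Lim F3 (\<lambda>u. AA a b c x y u))) \<longlongrightarrow> (z3 c * z2 b) * z1 a) F1"
    using tendsto_cong[of "\<lambda>x. (z3 c * z2 b) * pair x a" "\<lambda>x. Lim F2 (\<lambda>y. Lim F3 (\<lambda>u. AA a b c x y u))" F1] by simp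
  then show "((\<lambda>x. Lim F2 (\<lambda>y. Lim F3 (\<lambda>u. AA a b c x y u))) \<longlongrightarrow> z1 a * z2 b * z3 c) F1"
    by (simp add: mult_ac)
qed

end

theorem lemma3p3:
  fixes a b c :: "nat \<Rightarrow> real"
  assumes "a \<in> linf" and "b \<in> linf" and "c \<in> linf"
  shows "\<exists>A. cont_sym_trilinear_l1 A \<and>
    (\<forall>z1 z2 z3. l1_bidual z1 \<and> c0_perp z2 \<and> c0_perp z3 \<longrightarrow>
        AB_ext_value A z1 z2 z3 (z1 a * z2 b * z3 c))"
proof -
  obtain Ma Mb Mc where "\<forall>n. \<bar>a n\<bar> \<le> Ma" "\<forall>n. \<bar>b n\<bar> \<le> Mb" "\<forall>n. \<bar>c n\<bar> \<le> Mc"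
    using assms unfolding linf_def by blast
  then interpret abc a b c Ma Mb Mc by unfold_locales auto
  show ?thesis using AA_cont_sym main_AB by blast
qed

end
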